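(* For every nonnegative integer $n$, the number of partitions $\lambda$ of $n$ with $\ell(\lambda)+\mu_2(\lambda)$ even minus the number of partitions $\lambda$ of $n$ with $\ell(\lambda)+\mu_2(\lambda)$ odd equals the number of partitions of $n$ into distinct odd parts.
   Context: For a partition $\lambda$, $\ell(\lambda)$ is its number of parts, and $\mu_2(\lambda)$ (the $2$-measure) is the length of the longest subsequence of the parts of $\lambda$ (listed in weakly decreasing order) in which the difference between any two consecutive members of the subsequence is at least $2$. *)

theory Defs
  imports Main "HOL-Library.Sublist"
begin

definition is_partition :: "nat \<Rightarrow> nat list \<Rightarrow> bool" where
  "is_partition n xs \<longleftrightarrow> sorted_wrt (\<ge>) xs \<and> (\<forall>x\<in>set xs. 0 < x) \<and> sum_list xs = n"

definition partitions_of :: "nat \<Rightarrow> nat list set" where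
  "partitions_of n = {xs. is_partition n xs}"

definition num_parts :: "nat list \<Rightarrow> nat" where
  "num_parts xs = length xs"

definition mu2 :: "nat list \<Rightarrow> nat" where
  "mu2 xs = Max {length ys | ys. subseq ys xs \<and> successively (\<lambda>a b. b + 2 \<le> a) ys}"

end

theory Submission
  imports Defs "HOL-Computational_Algebra.Formal_Power_Series"
begin

unbundle fps_syntax


abbreviation P2 :: "nat \<Rightarrow> nat \<Rightarrow> bool" where "P2 \<equiv> (\<lambda>a b. b + 2 \<le> a)"

definition M2set :: "nat list \<Rightarrow> nat set" where
  "M2set xs = {length ys | ys. subseq ys xs \<and> successively P2 ys}"

lemma mu2_M2set: "mu2 xs = Max (M2set xs)"
  by (simp add: mu2_def M2set_def)

lemma M2set_finite: "finite (M2set xs)"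
proof -
  have "M2set xs \<subseteq> {0..length xs}"
    by (auto simp: M2set_def dest: list_emb_length)
  then show ?thesis using finite_subset by blast
qed

lemma M2set_nonempty: "0 \<in> M2set xs"
  unfolding M2set_def by (rule CollectI, rule exI[of _ "[]"]) auto

lemma mu2_ge:
  assumes "subseq ys xs" "successively P2 ys"
  shows "length ys \<le> mu2 xs"
proof -
  have "length ys \<in> M2set xs" using assms unfolding M2set_def by blast
  then show ?thesis unfolding mu2_M2set using M2set_finite by (rule Max_ge[rotated])
qed

lemma mu2_obtain:
  obtains ys where "subseq ys xs" "successively P2 ys" "length ys = mu2 xs"
proof -
  have "Max (M2set xs) \<in> M2set xs"
    using M2set_finite M2set_nonempty by (intro Max_in) auto
  then obtain ys where "subseq ys xs" "successively P2 ys" "length ys = Max (M2set xs)"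
    unfolding M2set_def by auto
  then show ?thesis using that by (simp add: mu2_M2set)
qed

lemma mu2_le:
  assumes "\<And>ys. subseq ys xs \<Longrightarrow> successively P2 ys \<Longrightarrow> length ys \<le> k"
  shows "mu2 xs \<le> k"
proof -
  obtain ys where "subseq ys xs" "successively P2 ys" "length ys = mu2 xs"
    by (rule mu2_obtain)
  then show ?thesis using assms by metis
qed

lemma mu2_Nil: "mu2 [] = 0"
  using mu2_le[of "[]" 0] by auto

lemma subseq_set: "subseq ys xs \<Longrightarrow> set ys \<subseteq> set xs"
  by (auto elim: list_emb_set)

lemma short_seq:
  assumes "set zs \<subseteq> {c, Suc c}" "subseq ys zs" "successively P2 ys"
  shows "length ys \<le> 1"
proof (rule ccontr)
  assume "\<not> length ys \<le> 1"
  then obtain a b r where ys: "ys = a # b # r"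
    by (cases ys; cases "tl ys") auto
  have "set ys \<subseteq> {c, Suc c}" using assms(1,2) subseq_set by blast
  moreover have "b + 2 \<le> a" using assms(3) ys by simp
  ultimately show False using ys by auto
qed

lemma mu2_append_small:
  assumes tau: "\<forall>x\<in>set tau. c + 2 \<le> x" and zs: "set zs \<subseteq> {c, Suc c}" "c \<in> set zs"
  shows "mu2 (tau @ zs) = mu2 tau + 1"
proof (rule antisym)
  show "mu2 (tau @ zs) \<le> mu2 tau + 1"
  proof (rule mu2_le)
    fix ys assume ys: "subseq ys (tau @ zs)" "successively P2 ys"
    then obtain ys1 ys2 where sp: "ys = ys1 @ ys2" "subseq ys1 tau" "subseq ys2 zs"
      by (auto elim: subseq_appendE)
    have "successively P2 ys1" "successively P2 ys2"
      using ys(2) sp(1) by (auto simp: successively_append_iff)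
    then have "length ys1 \<le> mu2 tau" "length ys2 \<le> 1"
      using sp mu2_ge short_seq[OF zs(1)] by auto
    then show "length ys \<le> mu2 tau + 1" using sp by simp
  qed
next
  obtain ys where ys: "subseq ys tau" "successively P2 ys" "length ys = mu2 tau"
    by (rule mu2_obtain)
  have "subseq (ys @ [c]) (tau @ zs)"
    using ys(1) zs(2) by (intro list_emb_append_mono) (auto simp: subseq_singleton_left)
  moreover have "successively P2 (ys @ [c])"
  proof -
    have "ys \<noteq> [] \<Longrightarrow> last ys \<in> set tau" using ys(1) subseq_set last_in_set by blast
    then show ?thesis using ys(2) tau by (auto simp: successively_append_iff)
  qed
  ultimately have "length (ys @ [c]) \<le> mu2 (tau @ zs)" by (rule mu2_ge)
  then show "mu2 tau + 1 \<le> mu2 (tau @ zs)" using ys(3) by simp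
qed

lemma sorted_dropWhile_small:
  fixes xs :: "nat list"
  assumes "sorted_wrt (\<ge>) xs"
  shows "\<forall>x\<in>set (dropWhile (\<lambda>x. c + 2 \<le> x) xs). x < c + 2"
  using assms
proof (induction xs)
  case Nil then show ?case by simp
next
  case (Cons a xs)
  show ?case
  proof (cases "c + 2 \<le> a")
    case True then show ?thesis using Cons by simp
  next
    case False then show ?thesis using Cons.prems by auto
  qed
qed

lemma mu2_key:
  assumes "sorted_wrt (\<ge>) xs" "\<forall>x\<in>set xs. c \<le> x" "c \<in> set xs"
  shows "mu2 xs = mu2 (takeWhile (\<lambda>x. c + 2 \<le> x) xs) + 1"
proof -
  let ?P = "\<lambda>x. c + 2 \<le> x"
  have eq: "xs = takeWhile ?P xs @ dropWhile ?P xs" by simp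
  have "\<forall>x\<in>set (takeWhile ?P xs). c + 2 \<le> x" by (auto dest: set_takeWhileD)
  moreover have "set (dropWhile ?P xs) \<subseteq> {c, Suc c}"
  proof
    fix x assume x: "x \<in> set (dropWhile ?P xs)"
    then have "x < c + 2" using sorted_dropWhile_small[OF assms(1), of c] by blast
    moreover have "c \<le> x" using x assms(2) by (meson set_dropWhileD)
    ultimately show "x \<in> {c, Suc c}" by auto
  qed
  moreover have "c \<in> set (dropWhile ?P xs)"
  proof -
    have "c \<notin> set (takeWhile ?P xs)" by (auto dest: set_takeWhileD)
    then show ?thesis using assms(3) eq by (metis Un_iff set_append)
  qed
  ultimately have "mu2 (takeWhile ?P xs @ dropWhile ?P xs) = mu2 (takeWhile ?P xs) + 1"
    by (rule mu2_append_small)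
  then show ?thesis using eq by simp
qed



definition PF :: "nat \<Rightarrow> nat \<Rightarrow> nat list set" where
  "PF c n = {xs \<in> partitions_of n. \<forall>x\<in>set xs. c \<le> x}"
definition PD :: "nat \<Rightarrow> nat \<Rightarrow> nat list set" where
  "PD c n = {xs \<in> PF c n. c \<in> set xs}"
definition sg :: "nat list \<Rightarrow> int" where
  "sg xs = (-1) ^ (length xs + mu2 xs)"
definition fF :: "nat \<Rightarrow> nat \<Rightarrow> int" where
  "fF c n = (\<Sum>xs\<in>PF c n. sg xs)"
definition dF :: "nat \<Rightarrow> nat \<Rightarrow> int" where
  "dF c n = (\<Sum>xs\<in>PD c n. sg xs)"
definition EF :: "nat \<Rightarrow> nat \<Rightarrow> int" where
  "EF c m = (\<Sum>ys\<in>PF (Suc c) m. sg (ys @ [c]))"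

lemma length_le_sum_list:
  fixes xs :: "nat list"
  assumes "\<forall>x\<in>set xs. 0 < x"
  shows "length xs \<le> sum_list xs"
  using assms by (induction xs) auto

lemma finite_partitions: "finite (partitions_of n)"
proof -
  have "partitions_of n \<subseteq> {xs. set xs \<subseteq> {..n} \<and> length xs \<le> n}"
  proof
    fix xs assume "xs \<in> partitions_of n"
    then have xs: "\<forall>x\<in>set xs. 0 < x" "sum_list xs = n"
      by (auto simp: partitions_of_def is_partition_def)
    then have "set xs \<subseteq> {..n}" using member_le_sum_list by fastforce
    moreover have "length xs \<le> n" using length_le_sum_list[OF xs(1)] xs(2) by simp
    ultimately show "xs \<in> {xs. set xs \<subseteq> {..n} \<and> length xs \<le> n}" by simp
  qed
  moreover have "finite {xs. set xs \<subseteq> {..n::nat} \<and> length xs \<le> n}"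
    by (rule finite_lists_length_le) simp
  ultimately show ?thesis by (rule finite_subset)
qed

lemma finite_PF: "finite (PF c n)"
  unfolding PF_def using finite_partitions by simp

lemma finite_PD: "finite (PD c n)"
  unfolding PD_def using finite_PF by simp

lemma PF_split: "PF c n = PF (Suc c) n \<union> PD c n" "PF (Suc c) n \<inter> PD c n = {}"
proof -
  show "PF c n = PF (Suc c) n \<union> PD c n"
  proof
    show "PF c n \<subseteq> PF (Suc c) n \<union> PD c n"
    proof
      fix xs assume xs: "xs \<in> PF c n"
      show "xs \<in> PF (Suc c) n \<union> PD c n"
      proof (cases "c \<in> set xs")
        case True then show ?thesis using xs by (simp add: PD_def)
      next
        case False
        have "\<forall>x\<in>set xs. Suc c \<le> x"
        proof
          fix x assume x: "x \<in> set xs"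
          then have "c \<le> x" using xs by (simp add: PF_def)
          moreover have "x \<noteq> c" using x False by blast
          ultimately show "Suc c \<le> x" by simp
        qed
        then show ?thesis using xs by (simp add: PF_def)
      qed
    qed
  next
    show "PF (Suc c) n \<union> PD c n \<subseteq> PF c n"
      by (auto simp: PF_def PD_def)
  qed
  show "PF (Suc c) n \<inter> PD c n = {}"
    by (auto simp: PF_def PD_def)
qed

lemma fF_split: "fF c n = fF (Suc c) n + dF c n"
  unfolding fF_def dF_def
  by (subst PF_split(1)) (rule sum.union_disjoint[OF finite_PF finite_PD PF_split(2)])

lemma sorted_last_le:
  fixes xs :: "nat list"
  assumes "sorted_wrt (\<ge>) xs" "xs \<noteq> []" "x \<in> set xs"
  shows "last xs \<le> x"
proof -
  have "xs = butlast xs @ [last xs]" using assms(2) by simp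
  then have "sorted_wrt (\<ge>) (butlast xs @ [last xs])" using assms(1) by simp
  then have "\<forall>y\<in>set (butlast xs). last xs \<le> y" by (simp add: sorted_wrt_append)
  moreover have "x \<in> set (butlast xs) \<or> x = last xs"
  proof -
    have "x \<in> set (butlast xs @ [last xs])" using assms(3) \<open>xs = butlast xs @ [last xs]\<close> by simp
    then show ?thesis by auto
  qed
  ultimately show ?thesis by auto
qed

lemma PD_image:
  assumes "0 < c" "c \<le> n"
  shows "PD c n = (\<lambda>ys. ys @ [c]) ` PF c (n - c)"
proof
  show "PD c n \<subseteq> (\<lambda>ys. ys @ [c]) ` PF c (n - c)"
  proof
    fix xs assume "xs \<in> PD c n"
    then have xs: "sorted_wrt (\<ge>) xs" "\<forall>x\<in>set xs. 0 < x" "sum_list xs = n"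
      "\<forall>x\<in>set xs. c \<le> x" "c \<in> set xs"
      by (auto simp: PD_def PF_def partitions_of_def is_partition_def)
    then have ne: "xs \<noteq> []" by auto
    have "last xs \<le> c" using sorted_last_le[OF xs(1) ne xs(5)] .
    moreover have "c \<le> last xs" using xs(4) ne by simp
    ultimately have lc: "last xs = c" by simp
    have eq: "xs = butlast xs @ [c]" using append_butlast_last_id[OF ne] lc by simp
    have "sorted_wrt (\<ge>) (butlast xs @ [c])" using xs(1) eq by simp
    then have "sorted_wrt (\<ge>) (butlast xs)" by (simp add: sorted_wrt_append)
    moreover have "sum_list (butlast xs) = n - c"
    proof -
      have "sum_list (butlast xs @ [c]) = n" using xs(3) eq by simp
      then show ?thesis by simp
    qed
    moreover have "\<forall>x\<in>set (butlast xs). 0 < x \<and> c \<le> x"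
      using xs(2,4) by (auto dest: in_set_butlastD)
    ultimately have "butlast xs \<in> PF c (n - c)"
      by (auto simp: PF_def partitions_of_def is_partition_def)
    then show "xs \<in> (\<lambda>ys. ys @ [c]) ` PF c (n - c)" using eq by blast
  qed
next
  show "(\<lambda>ys. ys @ [c]) ` PF c (n - c) \<subseteq> PD c n"
  proof
    fix xs assume "xs \<in> (\<lambda>ys. ys @ [c]) ` PF c (n - c)"
    then obtain ys where ys: "xs = ys @ [c]" "ys \<in> PF c (n - c)" by blast
    then have "sorted_wrt (\<ge>) ys" "\<forall>x\<in>set ys. 0 < x" "sum_list ys = n - c" "\<forall>x\<in>set ys. c \<le> x"
      by (auto simp: PF_def partitions_of_def is_partition_def)
    then have "sorted_wrt (\<ge>) (ys @ [c])" "\<forall>x\<in>set (ys @ [c]). 0 < x" "sum_list (ys @ [c]) = n"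
      "\<forall>x\<in>set (ys @ [c]). c \<le> x" "c \<in> set (ys @ [c])"
      using assms by (simp_all add: sorted_wrt_append)
    then show "xs \<in> PD c n" unfolding ys(1) PD_def PF_def partitions_of_def is_partition_def
      by blast
  qed
qed

lemma PD_empty: "n < c \<Longrightarrow> PD c n = {}"
  by (auto simp: PD_def PF_def partitions_of_def is_partition_def dest: member_le_sum_list)

lemma sum_append_c:
  assumes "0 < c" "c \<le> n"
  shows "(\<Sum>xs\<in>PD c n. h xs) = (\<Sum>ys\<in>PF c (n - c). h (ys @ [c]))"
proof -
  have "inj_on (\<lambda>ys. ys @ [c]) (PF c (n - c))" by (auto simp: inj_on_def)
  then show ?thesis unfolding PD_image[OF assms] by (simp add: sum.reindex)
qed

lemma PF_props:
  assumes "xs \<in> PF c n"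
  shows "sorted_wrt (\<ge>) xs" "\<forall>x\<in>set xs. c \<le> x" "\<forall>x\<in>set xs. 0 < x" "sum_list xs = n"
  using assms by (auto simp: PF_def partitions_of_def is_partition_def)

lemma sg_S1:
  assumes "ys \<in> PD c m"
  shows "sg (ys @ [c]) = - sg ys"
proof -
  have ys: "sorted_wrt (\<ge>) ys" "\<forall>x\<in>set ys. c \<le> x" "c \<in> set ys"
    using assms PF_props[of ys c m] by (auto simp: PD_def)
  let ?P = "\<lambda>x. c + 2 \<le> x"
  have s2: "sorted_wrt (\<ge>) (ys @ [c])" using ys by (simp add: sorted_wrt_append)
  have "mu2 (ys @ [c]) = mu2 (takeWhile ?P (ys @ [c])) + 1"
    by (rule mu2_key[OF s2]) (use ys in auto)
  also have "takeWhile ?P (ys @ [c]) = takeWhile ?P ys"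
    using ys(3) by (intro takeWhile_append1) auto
  also have "mu2 (takeWhile ?P ys) + 1 = mu2 ys" using mu2_key[OF ys] by simp
  finally show ?thesis by (simp add: sg_def)
qed

lemma sg_S2:
  assumes "ys \<in> PF (Suc (Suc c)) m"
  shows "sg (ys @ [c]) = sg ys"
proof -
  have "\<forall>x\<in>set ys. c + 2 \<le> x" using PF_props(2)[OF assms] by simp
  then have "mu2 (ys @ [c]) = mu2 ys + 1" by (rule mu2_append_small) auto
  then show ?thesis by (simp add: sg_def)
qed

lemma sg_S3:
  assumes "zs \<in> PF (Suc c) k"
  shows "sg (zs @ [Suc c, c]) = - sg (zs @ [c])"
proof -
  have zs: "sorted_wrt (\<ge>) zs" "\<forall>x\<in>set zs. Suc c \<le> x" using PF_props[OF assms] by auto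
  let ?P = "\<lambda>x. c + 2 \<le> x"
  have s1: "sorted_wrt (\<ge>) (zs @ [Suc c, c])" using zs by (auto simp: sorted_wrt_append)
  have s2: "sorted_wrt (\<ge>) (zs @ [c])" using zs by (auto simp: sorted_wrt_append)
  have "mu2 (zs @ [Suc c, c]) = mu2 (takeWhile ?P (zs @ [Suc c, c])) + 1"
    by (rule mu2_key[OF s1]) (use zs in auto)
  moreover have "mu2 (zs @ [c]) = mu2 (takeWhile ?P (zs @ [c])) + 1"
    by (rule mu2_key[OF s2]) (use zs in auto)
  moreover have "takeWhile ?P (zs @ [Suc c, c]) = takeWhile ?P (zs @ [c])"
    by (simp add: takeWhile_append)
  ultimately show ?thesis by (simp add: sg_def)
qed

lemma dF_rec:
  assumes "0 < c" "c \<le> n"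
  shows "dF c n = EF c (n - c) - dF c (n - c)"
proof -
  have "dF c n = (\<Sum>ys\<in>PF c (n - c). sg (ys @ [c]))"
    unfolding dF_def by (rule sum_append_c[OF assms])
  also have "\<dots> = (\<Sum>ys\<in>PF (Suc c) (n - c). sg (ys @ [c])) + (\<Sum>ys\<in>PD c (n - c). sg (ys @ [c]))"
    by (subst PF_split(1)) (rule sum.union_disjoint[OF finite_PF finite_PD PF_split(2)])
  also have "(\<Sum>ys\<in>PD c (n - c). sg (ys @ [c])) = (\<Sum>ys\<in>PD c (n - c). - sg ys)"
    by (rule sum.cong) (auto simp: sg_S1)
  finally show ?thesis by (simp add: EF_def dF_def sum_negf)
qed

lemma dF_small: "n < c \<Longrightarrow> dF c n = 0"
  by (simp add: dF_def PD_empty)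

lemma EF_rec:
  assumes "0 < c"
  shows "EF c m = fF (Suc (Suc c)) m - (if Suc c \<le> m then EF c (m - Suc c) else 0)"
proof -
  have "EF c m = (\<Sum>ys\<in>PF (Suc (Suc c)) m. sg (ys @ [c])) + (\<Sum>ys\<in>PD (Suc c) m. sg (ys @ [c]))"
    unfolding EF_def
    by (subst PF_split(1)) (rule sum.union_disjoint[OF finite_PF finite_PD PF_split(2)])
  also have "(\<Sum>ys\<in>PF (Suc (Suc c)) m. sg (ys @ [c])) = fF (Suc (Suc c)) m"
    unfolding fF_def by (rule sum.cong) (auto simp: sg_S2)
  also have "(\<Sum>ys\<in>PD (Suc c) m. sg (ys @ [c])) = (if Suc c \<le> m then - EF c (m - Suc c) else 0)"
  proof (cases "Suc c \<le> m")
    case True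
    have "(\<Sum>ys\<in>PD (Suc c) m. sg (ys @ [c])) = (\<Sum>zs\<in>PF (Suc c) (m - Suc c). sg ((zs @ [Suc c]) @ [c]))"
      by (rule sum_append_c) (use True in auto)
    also have "\<dots> = (\<Sum>zs\<in>PF (Suc c) (m - Suc c). sg (zs @ [Suc c, c]))" by simp
    also have "\<dots> = (\<Sum>zs\<in>PF (Suc c) (m - Suc c). - sg (zs @ [c]))"
      by (rule sum.cong) (auto simp: sg_S3)
    finally show ?thesis using True by (simp add: EF_def sum_negf)
  next
    case False then show ?thesis by (simp add: PD_empty)
  qed
  finally show ?thesis by simp
qed

lemma fF_base:
  assumes "0 < c" "n < c"
  shows "fF c n = (if n = 0 then 1 else 0)"
proof -
  have "PF c n = (if n = 0 then {[]} else {})"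
  proof -
    have "xs = []" if "xs \<in> PF c n" for xs
    proof (rule ccontr)
      assume "xs \<noteq> []"
      then obtain x where "x \<in> set xs" by (cases xs) auto
      then have "c \<le> x" using PF_props(2)[OF that] by blast
      moreover have "x \<le> n" using PF_props(4)[OF that] member_le_sum_list[OF \<open>x \<in> set xs\<close>] by simp
      ultimately show False using assms by simp
    qed
    moreover have "[] \<in> PF c n \<longleftrightarrow> n = 0"
      by (auto simp: PF_def partitions_of_def is_partition_def)
    ultimately show ?thesis by auto
  qed
  then show ?thesis by (simp add: fF_def sg_def mu2_Nil)
qed

lemma fF_R4:
  assumes "0 < c"
  shows "(fF c (m + c) - fF (Suc c) (m + c)) + (fF c m - fF (Suc c) m)
    + (if Suc c \<le> m then (fF c (m - 1) - fF (Suc c) (m - 1)) + (fF c (m - Suc c) - fF (Suc c) (m - Suc c)) else 0)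
    = fF (Suc (Suc c)) m"
proof -
  have d: "fF c k - fF (Suc c) k = dF c k" for k using fF_split[of c k] by simp
  have e1: "EF c m = dF c (m + c) + dF c m"
    using dF_rec[OF assms, of "m + c"] by simp
  have e2: "EF c (m - Suc c) = dF c (m - 1) + dF c (m - Suc c)" if "Suc c \<le> m"
    using dF_rec[OF assms, of "m - 1"] that by (simp add: diff_diff_add)
  show ?thesis using EF_rec[OF assms, of m] e1 e2 unfolding d by auto
qed

lemma fF_1: "fF 1 n = (\<Sum>xs\<in>partitions_of n. sg xs)"
proof -
  have "PF 1 n = partitions_of n"
    by (auto simp: PF_def partitions_of_def is_partition_def Suc_le_eq)
  then show ?thesis by (simp add: fF_def)
qed

lemma fF_R4':
  assumes "0 < c"
  shows "(fF c (m + c) - fF (Suc c) (m + c)) + (fF c m - fF (Suc c) m)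
    + (if 1 \<le> m then fF c (m - 1) - fF (Suc c) (m - 1) else 0)
    + (if Suc c \<le> m then fF c (m - Suc c) - fF (Suc c) (m - Suc c) else 0)
    = fF (Suc (Suc c)) m"
proof -
  have z: "fF c (m - 1) - fF (Suc c) (m - 1) = 0" if "1 \<le> m" "\<not> Suc c \<le> m"
  proof -
    have "fF c (m - 1) - fF (Suc c) (m - 1) = dF c (m - 1)" using fF_split[of c "m - 1"] by simp
    also have "\<dots> = 0" using that by (intro dF_small) simp
    finally show ?thesis .
  qed
  show ?thesis using fF_R4[OF assms, of m] z by (cases "1 \<le> m"; cases "Suc c \<le> m") auto
qed



definition Aq :: "nat \<Rightarrow> rat fps" where "Aq j = (\<Prod>i<j. 1 - fps_X ^ Suc i)"
definition Bq :: "nat \<Rightarrow> nat \<Rightarrow> rat fps" where "Bq c j = (\<Prod>i<j. 1 + fps_X ^ (c + i))"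
definition Tq :: "nat \<Rightarrow> nat \<Rightarrow> rat fps" where
  "Tq c j = fps_X ^ (j * (j + c - 1)) * inverse (Aq j * Bq c j)"

lemma prod_nth0: "(\<Prod>i<(j::nat). f i :: rat fps) $ 0 = (\<Prod>i<j. f i $ 0)"
  by (induction j) auto

lemma AB_nth0: "(Aq j * Bq c j) $ 0 \<noteq> 0"
proof -
  have "Aq j $ 0 = 1" unfolding Aq_def prod_nth0 by simp
  moreover have "Bq c j $ 0 \<noteq> 0"
  proof -
    have "\<forall>i. (1 + fps_X ^ (c + i) :: rat fps) $ 0 \<noteq> 0" by simp
    then show ?thesis unfolding Bq_def prod_nth0 by (simp add: prod_zero_iff)
  qed
  ultimately show ?thesis by simp
qed

lemma Tq_AB: "Tq c j * (Aq j * Bq c j) = fps_X ^ (j * (j + c - 1))"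
proof -
  have "inverse (Aq j * Bq c j) * (Aq j * Bq c j) = 1" using AB_nth0 by (rule inverse_mult_eq_1)
  then show ?thesis unfolding Tq_def by (simp add: mult.assoc)
qed

lemma Tq_0: "Tq c 0 = 1"
  by (simp add: Tq_def Aq_def Bq_def)

lemma Aq_Suc: "Aq (Suc j) = Aq j * (1 - fps_X ^ Suc j)"
  by (simp add: Aq_def)

lemma Bq_Suc: "Bq c (Suc j) = Bq c j * (1 + fps_X ^ (c + j))"
  by (simp add: Bq_def)

lemma Bq_Suc_shift: "Bq c (Suc j) = (1 + fps_X ^ c) * Bq (Suc c) j"
  unfolding Bq_def by (subst prod.lessThan_Suc_shift) simp

lemma nz_cancel:
  fixes L R M :: "rat fps"
  assumes "M $ 0 \<noteq> 0" "L * M = R * M"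
  shows "L = R"
proof -
  have "M \<noteq> 0" using assms(1) by auto
  then show ?thesis using assms(2) by simp
qed

lemma Tq_main:
  assumes "0 < c"
  shows "(1 + fps_X ^ c) * (1 + fps_X ^ Suc c) * (Tq c (Suc k) - Tq (Suc c) (Suc k))
         = fps_X ^ c * Tq (Suc (Suc c)) k"
proof -
  define X :: "rat fps" where "X = fps_X"
  define a0 where "a0 = Aq k"
  define a1 where "a1 = Aq (Suc k)"
  define b where "b = Bq (Suc (Suc c)) k"
  define b1 where "b1 = Bq c (Suc k)"
  define b2 where "b2 = Bq (Suc c) (Suc k)"
  define T1 where "T1 = Tq c (Suc k)"
  define T2 where "T2 = Tq (Suc c) (Suc k)"
  define T3 where "T3 = Tq (Suc (Suc c)) k"
  define e1 where "e1 = Suc k * (Suc k + c - 1)"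
  define e2 where "e2 = Suc k * (Suc k + Suc c - 1)"
  define e3 where "e3 = k * (k + Suc (Suc c) - 1)"
  have e21: "e2 = e1 + Suc k" using assms unfolding e1_def e2_def by (cases c) (auto simp: algebra_simps)
  have e31: "c + e3 = e1" using assms unfolding e1_def e3_def by (cases c) (auto simp: algebra_simps)
  have a1e: "a1 = a0 * (1 - X ^ Suc k)" unfolding a1_def a0_def X_def by (rule Aq_Suc)
  have b2e: "b2 = (1 + X ^ Suc c) * b" unfolding b2_def b_def X_def by (rule Bq_Suc_shift)
  have bb: "b1 * (1 + X ^ (c + Suc k)) = (1 + X ^ c) * b2"
    unfolding b1_def b2_def X_def by (metis Bq_Suc Bq_Suc_shift)
  have t1: "T1 * (a1 * b1) = X ^ e1" unfolding T1_def a1_def b1_def e1_def X_def by (rule Tq_AB)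
  have t2: "T2 * (a1 * b2) = X ^ e2" unfolding T2_def a1_def b2_def e2_def X_def by (rule Tq_AB)
  have t3: "T3 * (a0 * b) = X ^ e3" unfolding T3_def a0_def b_def e3_def X_def by (rule Tq_AB)
  define M where "M = a1 * ((1 + X ^ c) * b2)"
  have M0: "M $ 0 \<noteq> 0"
  proof -
    have "M = (Aq (Suc k) * Bq c (Suc (Suc k)))"
      unfolding M_def a1_def b2_def X_def by (simp add: Bq_Suc_shift[of c "Suc k"])
    then show ?thesis using AB_nth0 by simp
  qed
  have m1: "T1 * M = X ^ e1 * (1 + X ^ (c + Suc k))"
  proof -
    have "T1 * M = T1 * (a1 * (b1 * (1 + X ^ (c + Suc k))))" unfolding M_def bb ..
    also have "\<dots> = (T1 * (a1 * b1)) * (1 + X ^ (c + Suc k))" by (simp add: mult_ac)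
    finally show ?thesis using t1 by simp
  qed
  have m2: "T2 * M = X ^ e2 * (1 + X ^ c)"
  proof -
    have "T2 * M = (T2 * (a1 * b2)) * (1 + X ^ c)" unfolding M_def by (simp add: mult_ac)
    then show ?thesis using t2 by simp
  qed
  have m3: "T3 * M = X ^ e3 * ((1 - X ^ Suc k) * (1 + X ^ c) * (1 + X ^ Suc c))"
  proof -
    have "T3 * M = (T3 * (a0 * b)) * ((1 - X ^ Suc k) * (1 + X ^ c) * (1 + X ^ Suc c))"
      unfolding M_def a1e b2e by (simp add: mult_ac)
    then show ?thesis using t3 by simp
  qed
  have p1: "X ^ e1 * X ^ (c + Suc k) = X ^ e2 * X ^ c" using e21 by (simp add: power_add[symmetric] algebra_simps)
  have p2: "X ^ c * X ^ e3 = X ^ e1" using e31 by (simp add: power_add[symmetric])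
  have p3: "X ^ e2 = X ^ e1 * X ^ Suc k" using e21 by (simp add: power_add[symmetric])
  have "((1 + X ^ c) * (1 + X ^ Suc c) * (T1 - T2)) * M = (X ^ c * T3) * M"
  proof -
    have "((1 + X ^ c) * (1 + X ^ Suc c) * (T1 - T2)) * M = (1 + X ^ c) * (1 + X ^ Suc c) * (T1 * M - T2 * M)"
      by (simp add: algebra_simps)
    also have "\<dots> = (1 + X ^ c) * (1 + X ^ Suc c) * (X ^ e1 * (1 + X ^ (c + Suc k)) - X ^ e2 * (1 + X ^ c))"
      using m1 m2 by simp
    also have "\<dots> = (1 + X ^ c) * (1 + X ^ Suc c) * (X ^ e1 - X ^ e2)"
    proof -
      have "X ^ e1 * (1 + X ^ (c + Suc k)) - X ^ e2 * (1 + X ^ c) = X ^ e1 - X ^ e2"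
        using p1 by (simp add: algebra_simps)
      then show ?thesis by simp
    qed
    also have "\<dots> = (X ^ c * X ^ e3) * ((1 - X ^ Suc k) * (1 + X ^ c) * (1 + X ^ Suc c))"
      unfolding p2 p3 by (simp add: algebra_simps)
    also have "\<dots> = X ^ c * (T3 * M)" unfolding m3 by (simp add: mult_ac)
    finally show ?thesis by (simp add: mult_ac)
  qed
  then have "(1 + X ^ c) * (1 + X ^ Suc c) * (T1 - T2) = X ^ c * T3"
    by (rule nz_cancel[OF M0, rotated])
  then show ?thesis unfolding T1_def T2_def T3_def X_def .
qed

definition GS :: "nat \<Rightarrow> nat \<Rightarrow> rat fps" where "GS c N = (\<Sum>j\<le>N. Tq c j)"
definition YG :: "nat \<Rightarrow> nat \<Rightarrow> rat" where "YG c n = GS c n $ n"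

lemma GS_main:
  assumes "0 < c"
  shows "(1 + fps_X ^ c) * (1 + fps_X ^ Suc c) * (GS c (Suc N) - GS (Suc c) (Suc N))
         = fps_X ^ c * GS (Suc (Suc c)) N"
proof -
  have "GS c (Suc N) - GS (Suc c) (Suc N) = (\<Sum>j\<le>Suc N. Tq c j - Tq (Suc c) j)"
    unfolding GS_def by (simp add: sum_subtractf)
  also have "\<dots> = (\<Sum>k\<le>N. Tq c (Suc k) - Tq (Suc c) (Suc k))"
    by (subst sum.atMost_Suc_shift) (simp add: Tq_0)
  finally have "(1 + fps_X ^ c) * (1 + fps_X ^ Suc c) * (GS c (Suc N) - GS (Suc c) (Suc N))
      = (\<Sum>k\<le>N. (1 + fps_X ^ c) * (1 + fps_X ^ Suc c) * (Tq c (Suc k) - Tq (Suc c) (Suc k)))"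
    by (simp add: sum_distrib_left)
  also have "\<dots> = (\<Sum>k\<le>N. fps_X ^ c * Tq (Suc (Suc c)) k)"
    using Tq_main[OF assms] by simp
  finally show ?thesis by (simp add: GS_def sum_distrib_left)
qed

lemma Tq_nth_small:
  assumes "0 < c" "0 < j" "n < j * (j + c - 1)"
  shows "Tq c j $ n = 0"
  using assms unfolding Tq_def by (simp add: fps_X_power_mult_nth)

lemma exp_ge:
  fixes c j :: nat
  assumes "0 < c" "0 < j"
  shows "j \<le> j * (j + c - 1) \<and> c \<le> j * (j + c - 1)"
proof -
  have h1: "1 \<le> j + c - 1" using assms by presburger
  have h2: "c \<le> j + c - 1" using assms by presburger
  have "j * 1 \<le> j * (j + c - 1)" using h1 by (rule mult_le_mono2)
  moreover have "1 * (j + c - 1) \<le> j * (j + c - 1)" using assms(2) by (intro mult_le_mono1) simp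
  ultimately have a: "j \<le> j * (j + c - 1)" and b: "j + c - 1 \<le> j * (j + c - 1)" by simp_all
  have "c \<le> j * (j + c - 1)" using le_trans[OF h2 b] .
  then show ?thesis using a by simp
qed

lemma GS_trunc:
  assumes "0 < c" "n \<le> N"
  shows "GS c N $ n = YG c n"
proof -
  have "GS c N $ n = (\<Sum>j\<le>N. Tq c j $ n)" by (simp add: GS_def fps_sum_nth)
  also have "\<dots> = (\<Sum>j\<le>n. Tq c j $ n)"
  proof (rule sum.mono_neutral_right)
    show "finite {..N}" by simp
    show "{..n} \<subseteq> {..N}" using assms by auto
    show "\<forall>j\<in>{..N} - {..n}. Tq c j $ n = 0"
    proof
      fix j assume "j \<in> {..N} - {..n}"
      then have j: "n < j" by auto
      then have "0 < j" by simp
      then have "j \<le> j * (j + c - 1)" using exp_ge[OF assms(1)] by blast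
      then have "n < j * (j + c - 1)" using j by linarith
      then show "Tq c j $ n = 0" using Tq_nth_small[OF assms(1)] j by simp
    qed
  qed
  also have "\<dots> = YG c n" by (simp add: YG_def GS_def fps_sum_nth)
  finally show ?thesis .
qed

lemma YG_base:
  assumes "0 < c" "n < c"
  shows "YG c n = (if n = 0 then 1 else 0)"
proof -
  have "YG c n = (\<Sum>j\<le>n. Tq c j $ n)" by (simp add: YG_def GS_def fps_sum_nth)
  also have "\<dots> = Tq c 0 $ n + (\<Sum>j\<in>{..n} - {0}. Tq c j $ n)"
    by (rule sum.remove) auto
  also have "(\<Sum>j\<in>{..n} - {0}. Tq c j $ n) = 0"
  proof (rule sum.neutral, rule ballI)
    fix j assume "j \<in> {..n} - {0}"
    then have j: "0 < j" by auto
    have "c \<le> j * (j + c - 1)" using exp_ge[OF assms(1) j] by blast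
    then show "Tq c j $ n = 0" using assms j by (intro Tq_nth_small) auto
  qed
  finally show ?thesis by (simp add: Tq_0)
qed

lemma YG_R4:
  assumes "0 < c"
  shows "(YG c (m + c) - YG (Suc c) (m + c)) + (YG c m - YG (Suc c) m)
    + (if 1 \<le> m then YG c (m - 1) - YG (Suc c) (m - 1) else 0)
    + (if Suc c \<le> m then YG c (m - Suc c) - YG (Suc c) (m - Suc c) else 0)
    = YG (Suc (Suc c)) m"
proof -
  define N where "N = m + c"
  define S where "S = GS c (Suc N) - GS (Suc c) (Suc N)"
  have S: "S $ i = YG c i - YG (Suc c) i" if "i \<le> m + c" for i
    using that assms GS_trunc[of c i "Suc N"] GS_trunc[of "Suc c" i "Suc N"]
    by (simp add: S_def N_def)
  have eq: "((1 + fps_X ^ c) * (1 + fps_X ^ Suc c) * S) $ (m + c) = (fps_X ^ c * GS (Suc (Suc c)) N) $ (m + c)"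
    using GS_main[OF assms, of N] by (simp add: S_def)
  have r: "(fps_X ^ c * GS (Suc (Suc c)) N) $ (m + c) = YG (Suc (Suc c)) m"
    by (simp add: fps_X_power_mult_nth GS_trunc N_def)
  have q: "(1 + fps_X ^ c) * (1 + fps_X ^ Suc c) * S = S + fps_X ^ c * S + fps_X ^ Suc c * S + fps_X ^ (c + Suc c) * S"
    by (simp add: algebra_simps power_add)
  have l: "((1 + fps_X ^ c) * (1 + fps_X ^ Suc c) * S) $ (m + c)
     = S $ (m + c) + S $ m + (if 1 \<le> m then S $ (m - 1) else 0) + (if Suc c \<le> m then S $ (m - Suc c) else 0)"
  proof -
    have a: "(S + fps_X ^ c * S + fps_X ^ Suc c * S + fps_X ^ (c + Suc c) * S) $ (m + c)
       = S $ (m + c) + (if m + c < c then 0 else S $ (m + c - c))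
         + (if m + c < Suc c then 0 else S $ (m + c - Suc c))
         + (if m + c < c + Suc c then 0 else S $ (m + c - (c + Suc c)))"
      by (simp only: fps_add_nth fps_X_power_mult_nth)
    show ?thesis unfolding q a by auto
  qed
  have l2: "\<dots> = (YG c (m + c) - YG (Suc c) (m + c)) + (YG c m - YG (Suc c) m)
    + (if 1 \<le> m then YG c (m - 1) - YG (Suc c) (m - 1) else 0)
    + (if Suc c \<le> m then YG c (m - Suc c) - YG (Suc c) (m - Suc c) else 0)"
    using S by auto
  show ?thesis using eq r l l2 by simp
qed

lemma Tq1_rec:
  "Tq 1 (Suc j) * (1 - fps_X ^ (2 * j + 2)) = fps_X ^ (2 * j + 1) * Tq 1 j"
proof -
  define X :: "rat fps" where "X = fps_X"
  define N where "N = Aq j * Bq 1 j"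
  have N0: "N $ 0 \<noteq> 0" unfolding N_def by (rule AB_nth0)
  have MN: "Aq (Suc j) * Bq 1 (Suc j) = N * (1 - X ^ (2 * j + 2))"
  proof -
    have "2 * j + 2 = Suc j + Suc j" by simp
    then have xx: "X ^ (2 * j + 2) = X ^ Suc j * X ^ Suc j" by (simp only: power_add)
    have "(1 - X ^ Suc j) * (1 + X ^ Suc j) = 1 - X ^ (2 * j + 2)"
      unfolding xx by (simp add: algebra_simps)
    then show ?thesis unfolding N_def X_def[symmetric]
      by (simp add: Aq_Suc Bq_Suc X_def mult_ac)
  qed
  have "(Tq 1 (Suc j) * (1 - X ^ (2 * j + 2))) * N = Tq 1 (Suc j) * (Aq (Suc j) * Bq 1 (Suc j))"
    unfolding MN by (simp add: mult_ac)
  also have "\<dots> = X ^ (Suc j * Suc j)" unfolding X_def using Tq_AB[of 1 "Suc j"] by simp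
  also have "\<dots> = X ^ (2 * j + 1) * X ^ (j * j)"
  proof -
    have "Suc j * Suc j = (2 * j + 1) + j * j" by simp
    then show ?thesis by (simp only: power_add)
  qed
  also have "\<dots> = (X ^ (2 * j + 1) * Tq 1 j) * N"
    using Tq_AB[of 1 j] unfolding N_def X_def by (simp add: mult_ac)
  finally have "(Tq 1 (Suc j) * (1 - X ^ (2 * j + 2))) * N = (X ^ (2 * j + 1) * Tq 1 j) * N" .
  then show ?thesis using nz_cancel[OF N0] unfolding X_def by blast
qed

lemma Tq1_nth_rec:
  "Tq 1 (Suc j) $ n = (if 2 * j + 2 \<le> n then Tq 1 (Suc j) $ (n - (2 * j + 2)) else 0)
      + (if 2 * j + 1 \<le> n then Tq 1 j $ (n - (2 * j + 1)) else 0)"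
proof -
  have e: "Tq 1 (Suc j) - Tq 1 (Suc j) * fps_X ^ (2 * j + 2) = fps_X ^ (2 * j + 1) * Tq 1 j"
    using Tq1_rec[of j] by (simp add: right_diff_distrib)
  have "(Tq 1 (Suc j) - Tq 1 (Suc j) * fps_X ^ (2 * j + 2)) $ n = (fps_X ^ (2 * j + 1) * Tq 1 j) $ n"
    using e by (rule arg_cong)
  then have "Tq 1 (Suc j) $ n - (Tq 1 (Suc j) * fps_X ^ (2 * j + 2)) $ n = (fps_X ^ (2 * j + 1) * Tq 1 j) $ n"
    by (simp only: fps_sub_nth)
  then have "Tq 1 (Suc j) $ n = (Tq 1 (Suc j) * fps_X ^ (2 * j + 2)) $ n + (fps_X ^ (2 * j + 1) * Tq 1 j) $ n"
    by (simp add: algebra_simps)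
  then show ?thesis by (simp only: fps_X_power_mult_right_nth fps_X_power_mult_nth not_less if_not_P) (auto simp: not_less)
qed

lemma Tq1_0_nth: "Tq 1 0 $ n = (if n = 0 then 1 else 0)"
  by (simp add: Tq_0)



definition SO :: "nat \<Rightarrow> nat \<Rightarrow> nat list set" where
  "SO j n = {xs \<in> partitions_of n. distinct xs \<and> (\<forall>x\<in>set xs. odd x) \<and> length xs = j}"

lemma sum_list_map_plus2: "sum_list (map (\<lambda>x::nat. x + 2) ys) = sum_list ys + 2 * length ys"
  by (induction ys) auto

lemma map_plus2_props:
  fixes ys :: "nat list"
  shows "sorted_wrt (\<ge>) (map (\<lambda>x. x + 2) ys) \<longleftrightarrow> sorted_wrt (\<ge>) ys"
    and "distinct (map (\<lambda>x. x + 2) ys) \<longleftrightarrow> distinct ys"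
    and "(\<forall>x\<in>set (map (\<lambda>x. x + 2) ys). odd x) \<longleftrightarrow> (\<forall>x\<in>set ys. odd x)"
    and "\<forall>x\<in>set (map (\<lambda>x. x + 2) ys). 0 < x"
    and "length (map (\<lambda>x. x + 2) ys) = length ys"
  by (auto simp: sorted_wrt_map distinct_map inj_on_def)

lemma map_minus2:
  fixes xs :: "nat list"
  assumes "\<forall>x\<in>set xs. 2 \<le> x"
  shows "xs = map (\<lambda>x. x + 2) (map (\<lambda>x. x - 2) xs)"
  using assms by (induction xs) auto

lemma odd_ne1_ge3: "odd (x::nat) \<Longrightarrow> x \<noteq> 1 \<Longrightarrow> 3 \<le> x"
  by presburger

lemma SO_A:
  "{xs \<in> SO (Suc j) n. 1 \<notin> set xs} =
     (if 2 * j + 2 \<le> n then map (\<lambda>x. x + 2) ` SO (Suc j) (n - (2 * j + 2)) else {})"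
proof -
  have sub: "xs \<in> map (\<lambda>x. x + 2) ` SO (Suc j) (n - (2 * j + 2)) \<and> 2 * j + 2 \<le> n"
    if xs: "xs \<in> SO (Suc j) n" "1 \<notin> set xs" for xs
  proof -
    have p: "sorted_wrt (\<ge>) xs" "\<forall>x\<in>set xs. 0 < x" "sum_list xs = n" "distinct xs"
      "\<forall>x\<in>set xs. odd x" "length xs = Suc j"
      using xs(1) by (auto simp: SO_def partitions_of_def is_partition_def)
    have ge3: "\<forall>x\<in>set xs. 3 \<le> x" using p(5) xs(2) odd_ne1_ge3 by blast
    define ys where "ys = map (\<lambda>x. x - 2) xs"
    have eq: "xs = map (\<lambda>x. x + 2) ys" unfolding ys_def using ge3 by (intro map_minus2) auto
    have "sorted_wrt (\<ge>) ys" "distinct ys" "\<forall>x\<in>set ys. odd x" "length ys = Suc j"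
      using p eq map_plus2_props[of ys] by metis+
    moreover have "\<forall>x\<in>set ys. 0 < x" using ge3 by (auto simp: ys_def)
    moreover have sy: "sum_list ys + 2 * Suc j = n"
      using p(3,6) eq sum_list_map_plus2[of ys] by (metis length_map)
    ultimately have "ys \<in> SO (Suc j) (n - (2 * j + 2))"
      by (auto simp: SO_def partitions_of_def is_partition_def)
    then show ?thesis using eq sy by auto
  qed
  have sup: "xs \<in> SO (Suc j) n \<and> 1 \<notin> set xs"
    if h: "2 * j + 2 \<le> n" "xs \<in> map (\<lambda>x. x + 2) ` SO (Suc j) (n - (2 * j + 2))" for xs
  proof -
    obtain ys where ys: "xs = map (\<lambda>x. x + 2) ys" "ys \<in> SO (Suc j) (n - (2 * j + 2))"
      using h(2) by blast
    have p: "sorted_wrt (\<ge>) ys" "sum_list ys = n - (2 * j + 2)" "distinct ys"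
      "\<forall>x\<in>set ys. odd x" "length ys = Suc j"
      using ys(2) by (auto simp: SO_def partitions_of_def is_partition_def)
    have "sum_list xs = n" using ys(1) p(2,5) h(1) sum_list_map_plus2[of ys] by simp
    then show ?thesis using ys(1) p map_plus2_props[of ys]
      by (auto simp: SO_def partitions_of_def is_partition_def)
  qed
  show ?thesis using sub sup by auto
qed

lemma SO_B:
  "{xs \<in> SO (Suc j) n. 1 \<in> set xs} =
     (if 2 * j + 1 \<le> n then (\<lambda>ys. map (\<lambda>x. x + 2) ys @ [1]) ` SO j (n - (2 * j + 1)) else {})"
proof -
  have sub: "xs \<in> (\<lambda>ys. map (\<lambda>x. x + 2) ys @ [1]) ` SO j (n - (2 * j + 1)) \<and> 2 * j + 1 \<le> n"
    if xs: "xs \<in> SO (Suc j) n" "1 \<in> set xs" for xs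
  proof -
    have p: "sorted_wrt (\<ge>) xs" "\<forall>x\<in>set xs. 0 < x" "sum_list xs = n" "distinct xs"
      "\<forall>x\<in>set xs. odd x" "length xs = Suc j"
      using xs(1) by (auto simp: SO_def partitions_of_def is_partition_def)
    have ne: "xs \<noteq> []" using xs(2) by auto
    have "last xs \<le> 1" using sorted_last_le[OF p(1) ne xs(2)] .
    moreover have "0 < last xs" using p(2) ne by simp
    ultimately have l1: "last xs = 1" by simp
    define zs where "zs = butlast xs"
    have xz: "xs = zs @ [1]" unfolding zs_def using append_butlast_last_id[OF ne] l1 by simp
    have pz: "sorted_wrt (\<ge>) zs" "distinct zs" "\<forall>x\<in>set zs. odd x" "1 \<notin> set zs" "length zs = j"
      "sum_list zs + 1 = n"
      using p xz by (auto simp: sorted_wrt_append)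
    have ge3: "\<forall>x\<in>set zs. 3 \<le> x" using pz(3,4) odd_ne1_ge3 by blast
    define ys where "ys = map (\<lambda>x. x - 2) zs"
    have eq: "zs = map (\<lambda>x. x + 2) ys" unfolding ys_def using ge3 by (intro map_minus2) auto
    have "sorted_wrt (\<ge>) ys" "distinct ys" "\<forall>x\<in>set ys. odd x" "length ys = j"
      using pz eq map_plus2_props[of ys] by metis+
    moreover have "\<forall>x\<in>set ys. 0 < x" using ge3 by (auto simp: ys_def)
    moreover have sy: "sum_list ys + 2 * j + 1 = n"
      using pz(5,6) eq sum_list_map_plus2[of ys] by (metis length_map)
    ultimately have "ys \<in> SO j (n - (2 * j + 1))"
      by (auto simp: SO_def partitions_of_def is_partition_def)
    then show ?thesis using eq xz sy by auto
  qed
  have sup: "xs \<in> SO (Suc j) n \<and> 1 \<in> set xs"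
    if h: "2 * j + 1 \<le> n" "xs \<in> (\<lambda>ys. map (\<lambda>x. x + 2) ys @ [1]) ` SO j (n - (2 * j + 1))" for xs
  proof -
    obtain ys where ys: "xs = map (\<lambda>x. x + 2) ys @ [1]" "ys \<in> SO j (n - (2 * j + 1))"
      using h(2) by blast
    have p: "sorted_wrt (\<ge>) ys" "sum_list ys = n - (2 * j + 1)" "distinct ys"
      "\<forall>x\<in>set ys. odd x" "length ys = j"
      using ys(2) by (auto simp: SO_def partitions_of_def is_partition_def)
    have "sum_list xs = n" using ys(1) p(2,5) h(1) sum_list_map_plus2[of ys] by simp
    moreover have "sorted_wrt (\<ge>) xs" using ys(1) p(1) map_plus2_props(1)[of ys]
      by (auto simp: sorted_wrt_append)
    moreover have "distinct xs" using ys(1) p(3) map_plus2_props(2)[of ys] by auto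
    ultimately show ?thesis using ys(1) p map_plus2_props[of ys]
      by (auto simp: SO_def partitions_of_def is_partition_def)
  qed
  show ?thesis using sub sup by auto
qed

lemma finite_SO: "finite (SO j n)"
  using finite_partitions by (simp add: SO_def)

lemma card_SO_rec:
  "card (SO (Suc j) n) = (if 2 * j + 2 \<le> n then card (SO (Suc j) (n - (2 * j + 2))) else 0)
     + (if 2 * j + 1 \<le> n then card (SO j (n - (2 * j + 1))) else 0)"
proof -
  have split: "SO (Suc j) n = {xs \<in> SO (Suc j) n. 1 \<notin> set xs} \<union> {xs \<in> SO (Suc j) n. 1 \<in> set xs}"
    by auto
  have "card (SO (Suc j) n) = card {xs \<in> SO (Suc j) n. 1 \<notin> set xs} + card {xs \<in> SO (Suc j) n. 1 \<in> set xs}"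
    by (subst split, rule card_Un_disjoint) (use finite_SO in auto)
  moreover have "card {xs \<in> SO (Suc j) n. 1 \<notin> set xs} = (if 2 * j + 2 \<le> n then card (SO (Suc j) (n - (2 * j + 2))) else 0)"
  proof -
    have "inj_on (map (\<lambda>x::nat. x + 2)) A" for A by (auto simp: inj_on_def)
    then show ?thesis unfolding SO_A by (simp add: card_image)
  qed
  moreover have "card {xs \<in> SO (Suc j) n. 1 \<in> set xs} = (if 2 * j + 1 \<le> n then card (SO j (n - (2 * j + 1))) else 0)"
  proof -
    have "inj_on (\<lambda>ys. map (\<lambda>x::nat. x + 2) ys @ [1]) A" for A by (auto simp: inj_on_def)
    then show ?thesis unfolding SO_B by (simp add: card_image)
  qed
  ultimately show ?thesis by simp
qed

lemma card_SO_0: "card (SO 0 n) = (if n = 0 then 1 else 0)"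
proof -
  have "SO 0 n = (if n = 0 then {[]} else {})"
    by (auto simp: SO_def partitions_of_def is_partition_def)
  then show ?thesis by simp
qed

lemma Tq1_SO: "Tq 1 j $ n = of_nat (card (SO j n))"
proof (induction j arbitrary: n)
  case 0
  then show ?case by (simp add: Tq_0 card_SO_0)
next
  case (Suc j)
  show ?case
  proof (induction n rule: less_induct)
    case (less n)
    show ?case
      by (subst Tq1_nth_rec, subst card_SO_rec) (use less Suc.IH in auto)
  qed
qed

lemma card_distinct_odd:
  "card {xs \<in> partitions_of n. distinct xs \<and> (\<forall>x\<in>set xs. odd x)} = (\<Sum>j\<le>n. card (SO j n))"
proof -
  have eq: "{xs \<in> partitions_of n. distinct xs \<and> (\<forall>x\<in>set xs. odd x)} = (\<Union>j\<in>{..n}. SO j n)"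
  proof
    show "{xs \<in> partitions_of n. distinct xs \<and> (\<forall>x\<in>set xs. odd x)} \<subseteq> (\<Union>j\<in>{..n}. SO j n)"
    proof
      fix xs assume xs: "xs \<in> {xs \<in> partitions_of n. distinct xs \<and> (\<forall>x\<in>set xs. odd x)}"
      then have "\<forall>x\<in>set xs. 0 < x" "sum_list xs = n"
        by (auto simp: partitions_of_def is_partition_def)
      then have "length xs \<le> n" using length_le_sum_list by metis
      then show "xs \<in> (\<Union>j\<in>{..n}. SO j n)" using xs by (auto simp: SO_def)
    qed
  qed (auto simp: SO_def)
  show ?thesis unfolding eq
    apply (rule card_UN_disjoint)
      apply simp
     apply (simp add: finite_SO)
    apply (auto simp: SO_def)
    done
qed

lemma YG_1: "YG 1 n = of_nat (card {xs \<in> partitions_of n. distinct xs \<and> (\<forall>x\<in>set xs. odd x)})"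
proof -
  have "YG 1 n = (\<Sum>j\<le>n. Tq 1 j $ n)" unfolding YG_def GS_def fps_sum_nth ..
  also have "\<dots> = (\<Sum>j\<le>n. of_nat (card (SO j n)))" by (rule sum.cong) (simp_all only: Tq1_SO)
  also have "\<dots> = of_nat (\<Sum>j\<le>n. card (SO j n))" by simp
  finally show ?thesis by (simp only: card_distinct_odd)
qed



lemma uniq:
  fixes Y Z :: "nat \<Rightarrow> nat \<Rightarrow> rat"
  assumes bY: "\<And>c n. 0 < c \<Longrightarrow> n < c \<Longrightarrow> Y c n = (if n = 0 then 1 else 0)"
      and bZ: "\<And>c n. 0 < c \<Longrightarrow> n < c \<Longrightarrow> Z c n = (if n = 0 then 1 else 0)"
      and rY: "\<And>c m. 0 < c \<Longrightarrow> (Y c (m + c) - Y (Suc c) (m + c)) + (Y c m - Y (Suc c) m)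
        + (if 1 \<le> m then Y c (m - 1) - Y (Suc c) (m - 1) else 0)
        + (if Suc c \<le> m then Y c (m - Suc c) - Y (Suc c) (m - Suc c) else 0) = Y (Suc (Suc c)) m"
      and rZ: "\<And>c m. 0 < c \<Longrightarrow> (Z c (m + c) - Z (Suc c) (m + c)) + (Z c m - Z (Suc c) m)
        + (if 1 \<le> m then Z c (m - 1) - Z (Suc c) (m - 1) else 0)
        + (if Suc c \<le> m then Z c (m - Suc c) - Z (Suc c) (m - Suc c) else 0) = Z (Suc (Suc c)) m"
  shows "0 < c \<Longrightarrow> Y c n = Z c n"
proof (induction n arbitrary: c rule: less_induct)
  case (less n)
  have IH: "Y c' m = Z c' m" if "m < n" "0 < c'" for m c' using less.IH that by blast
  show ?case
  proof (cases "n < c")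
    case True then show ?thesis using bY bZ less.prems by simp
  next
    case False
    then have cn: "c \<le> n" by simp
    have step: "Y k n = Z k n" if k: "0 < k" "k \<le> n" "Y (Suc k) n = Z (Suc k) n" for k
    proof -
      define m where "m = n - k"
      have nm: "n = m + k" using k(2) by (simp add: m_def)
      have mlt: "m < n" using k(1) nm by simp
      have a: "Y k m - Y (Suc k) m = Z k m - Z (Suc k) m" using IH[OF mlt] k(1) by simp
      have b: "(if 1 \<le> m then Y k (m - 1) - Y (Suc k) (m - 1) else 0)
             = (if 1 \<le> m then Z k (m - 1) - Z (Suc k) (m - 1) else 0)"
        using IH[of "m - 1"] mlt k(1) by auto
      have c: "(if Suc k \<le> m then Y k (m - Suc k) - Y (Suc k) (m - Suc k) else 0)
             = (if Suc k \<le> m then Z k (m - Suc k) - Z (Suc k) (m - Suc k) else 0)"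
        using IH[of "m - Suc k"] mlt k(1) by auto
      have d: "Y (Suc (Suc k)) m = Z (Suc (Suc k)) m" using IH[OF mlt] by simp
      have "Y k (m + k) - Y (Suc k) (m + k) = Z k (m + k) - Z (Suc k) (m + k)"
        using rY[OF k(1), of m] rZ[OF k(1), of m] a b c d by linarith
      then show ?thesis using k(3) nm by simp
    qed
    have "\<forall>k. 0 < k \<longrightarrow> k \<le> n \<longrightarrow> n - k \<le> d \<longrightarrow> Y k n = Z k n" for d
    proof (induction d)
      case 0
      show ?case
      proof (intro allI impI)
        fix k assume k: "0 < k" "k \<le> n" "n - k \<le> 0"
        then have "k = n" by simp
        have "Y (Suc k) n = Z (Suc k) n" using bY bZ \<open>k = n\<close> by simp
        then show "Y k n = Z k n" using step k by blast
      qed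
    next
      case (Suc d)
      show ?case
      proof (intro allI impI)
        fix k assume k: "0 < k" "k \<le> n" "n - k \<le> Suc d"
        have "Y (Suc k) n = Z (Suc k) n"
        proof (cases "Suc k \<le> n")
          case True then show ?thesis using Suc.IH k by auto
        next
          case False then show ?thesis using bY bZ by simp
        qed
        then show "Y k n = Z k n" using step k by blast
      qed
    qed
    then show ?thesis using less.prems cn by blast
  qed
qed

lemma main_identity: "of_int (fF 1 n) = YG 1 n"
proof -
  define Y where "Y = (\<lambda>c n. (of_int (fF c n) :: rat))"
  have "Y 1 n = YG 1 n"
  proof (rule uniq[of Y YG])
    show "Y c n = (if n = 0 then 1 else 0)" if "0 < c" "n < c" for c n
      using fF_base[OF that] by (simp add: Y_def)
    show "YG c n = (if n = 0 then 1 else 0)" if "0 < c" "n < c" for c n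
      using YG_base[OF that] .
    show "(Y c (m + c) - Y (Suc c) (m + c)) + (Y c m - Y (Suc c) m)
        + (if 1 \<le> m then Y c (m - 1) - Y (Suc c) (m - 1) else 0)
        + (if Suc c \<le> m then Y c (m - Suc c) - Y (Suc c) (m - Suc c) else 0) = Y (Suc (Suc c)) m"
      if "0 < c" for c m
    proof -
      have "(of_int ((fF c (m + c) - fF (Suc c) (m + c)) + (fF c m - fF (Suc c) m)
        + (if 1 \<le> m then fF c (m - 1) - fF (Suc c) (m - 1) else 0)
        + (if Suc c \<le> m then fF c (m - Suc c) - fF (Suc c) (m - Suc c) else 0)) :: rat)
        = of_int (fF (Suc (Suc c)) m)"
        by (simp only: fF_R4'[OF that])
      then show ?thesis unfolding Y_def
        by (simp only: of_int_add of_int_diff if_distrib[where f = of_int] of_int_0)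
    qed
    show "(YG c (m + c) - YG (Suc c) (m + c)) + (YG c m - YG (Suc c) m)
        + (if 1 \<le> m then YG c (m - 1) - YG (Suc c) (m - 1) else 0)
        + (if Suc c \<le> m then YG c (m - Suc c) - YG (Suc c) (m - Suc c) else 0) = YG (Suc (Suc c)) m"
      if "0 < c" for c m
      using YG_R4[OF that] .
  qed simp
  then show ?thesis by (simp add: Y_def)
qed

theorem corollary1p6:
  fixes n :: nat
  shows "int (card {xs \<in> partitions_of n. even (num_parts xs + mu2 xs)})
         - int (card {xs \<in> partitions_of n. odd (num_parts xs + mu2 xs)})
       = int (card {xs \<in> partitions_of n. distinct xs \<and> (\<forall>x\<in>set xs. odd x)})"
proof -
  let ?E = "{xs \<in> partitions_of n. even (num_parts xs + mu2 xs)}"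
  let ?O = "{xs \<in> partitions_of n. odd (num_parts xs + mu2 xs)}"
  have split: "partitions_of n = ?E \<union> ?O" by auto
  have "fF 1 n = (\<Sum>xs\<in>partitions_of n. sg xs)" by (rule fF_1)
  also have "\<dots> = (\<Sum>xs\<in>?E. sg xs) + (\<Sum>xs\<in>?O. sg xs)"
    by (subst split, rule sum.union_disjoint) (use finite_partitions in auto)
  also have "(\<Sum>xs\<in>?E. sg xs) = (\<Sum>xs\<in>?E. 1)"
    by (rule sum.cong) (auto simp: sg_def num_parts_def)
  also have "(\<Sum>xs\<in>?O. sg xs) = (\<Sum>xs\<in>?O. -1)"
    by (rule sum.cong) (auto simp: sg_def num_parts_def)
  finally have f1: "fF 1 n = int (card ?E) - int (card ?O)" by simp
  have "(of_int (fF 1 n) :: rat) = of_nat (card {xs \<in> partitions_of n. distinct xs \<and> (\<forall>x\<in>set xs. odd x)})"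
    using main_identity YG_1 by simp
  then have "fF 1 n = int (card {xs \<in> partitions_of n. distinct xs \<and> (\<forall>x\<in>set xs. odd x)})"
  proof -
    have "(of_int (fF 1 n) :: rat) = of_int (int (card {xs \<in> partitions_of n. distinct xs \<and> (\<forall>x\<in>set xs. odd x)}))"
      using \<open>(of_int (fF 1 n) :: rat) = _\<close> by simp
    then show ?thesis by (simp only: of_int_eq_iff)
  qed
  then show ?thesis using f1 by simp
qed


end
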